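(* For any two distinct primes $p\neq q$, $\mathrm{CSP}(\mathbf Z_p)\not\le_{\mathrm{DL}}\mathrm{CSP}(\mathbf Z_q)$.
   Context: Structures. A (multisorted relational) signature consists of types and relation symbols, each symbol $R$ having an arity $\mathrm{ar}_R$, a tuple of types. A structure $\mathbf A$ consists of a set $A_t$ per type and relations $R^{\mathbf A}\subseteq A_{\mathrm{ar}_R(1)}\times\dots\times A_{\mathrm{ar}_R(k)}$. A homomorphism is a type-preserving family of maps preserving all relations; write $\mathbf A\to\mathbf B$. $\mathrm{CSP}(\mathbf A)$: given finite $\mathbf X$, decide whether $\mathbf X\to\mathbf A$. A map $\psi$ on structures is a reduction from $\mathrm{CSP}(\mathbf A)$ to $\mathrm{CSP}(\mathbf B)$ if $\mathbf X\to\mathbf A\Rightarrow\psi(\mathbf X)\to\mathbf B$ and $\psi(\mathbf X)\to\mathbf B\Rightarrow\mathbf X\to\mathbf A$. Group templates. For $n\ge 2$, $\mathbf Z_n$ is the single-sorted structure with domain $\mathbb Z_n=\{0,\dots,n-1\}$, the ternary relation $\{(x_1,x_2,y)\mid x_1+x_2\equiv y \pmod n\}$, and a unary relation $\{b\}$ for each $b\in\mathbb Z_n$ (so $\mathrm{CSP}(\mathbf Z_n)$ is solving systems of linear equations modulo $n$). Datalog interpretations. A Datalog program with input signature $\Pi$: a signature $\Delta\supseteq\Pi$ with the same types, finitely many rules $t_0\leftarrow t_1,\dots,t_r$ with typed atomic $\Delta$-formulas (relational atoms or equalities; heads use neither $\Pi$-symbols nor equality), a designated output symbol, least-fixed-point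 semantics. A Datalog interpretation $\phi$ from $\Pi$- to $\Sigma$-structures: a program $\phi_t$ per $\Sigma$-type and $\phi_R$ per $\Sigma$-symbol (arity of $\phi_R$ = concatenation of arities of $\phi_{\mathrm{ar}_R(i)}$); $\phi(\mathbf A)$ has $t$-th domain $\phi_t(\mathbf A)$ and $(w_1,\dots,w_k)\in R^{\phi(\mathbf A)}$ iff the concatenation is in $\phi_R(\mathbf A)$. Union gadgets and $\le_{\mathrm{DL}}$. A union gadget $\upsilon=(d,r)$ from $\Pi$ to $\Sigma$: maps $d$ ($\Pi$-types to $\Sigma$-types) and $r$ ($\Pi$-symbols to $\Sigma$-symbols) with $\mathrm{ar}_{r(R)}=d\circ\mathrm{ar}_R$; $\upsilon(\mathbf A)$ has $t$-th domain the disjoint union of the $A_s$ with $d(s)=t$, and $S^{\upsilon(\mathbf A)}=\bigcup_{r(R)=S}R^{\mathbf A}$. A Datalog$^\cup$ reduction is a composition $\upsilon\circ\phi$; $\mathrm{CSP}(\mathbf A)\le_{\mathrm{DL}}\mathrm{CSP}(\mathbf B)$ means some Datalog$^\cup$ reduction is a reduction from $\mathrm{CSP}(\mathbf A)$ to $\mathrm{CSP}(\mathbf B)$. *)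

theory Defs
  imports "HOL-Computational_Algebra.Primes"
begin

record sig =
  tys  :: "nat set"
  syms :: "nat set"
  ar   :: "nat \<Rightarrow> nat list"

definition wf_sig :: "sig \<Rightarrow> bool" where
  "wf_sig S \<longleftrightarrow> finite (tys S) \<and> finite (syms S) \<and>
     (\<forall>R\<in>syms S. set (ar S R) \<subseteq> tys S)"

record 'a struct =
  sdom :: "nat \<Rightarrow> 'a set"
  srel :: "nat \<Rightarrow> 'a list set"

definition is_struct :: "sig \<Rightarrow> 'a struct \<Rightarrow> bool" where
  "is_struct S A \<longleftrightarrow>
     (\<forall>R\<in>syms S. \<forall>xs\<in>srel A R. length xs = length (ar S R) \<and>
        (\<forall>i<length xs. xs ! i \<in> sdom A (ar S R ! i)))"

definition finite_struct :: "sig \<Rightarrow> 'a struct \<Rightarrow> bool" where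
  "finite_struct S A \<longleftrightarrow> (\<forall>t\<in>tys S. finite (sdom A t))"

definition hom :: "sig \<Rightarrow> 'a struct \<Rightarrow> 'b struct \<Rightarrow> (nat \<Rightarrow> 'a \<Rightarrow> 'b) \<Rightarrow> bool" where
  "hom S A B h \<longleftrightarrow>
     (\<forall>t\<in>tys S. \<forall>x\<in>sdom A t. h t x \<in> sdom B t) \<and>
     (\<forall>R\<in>syms S. \<forall>xs\<in>srel A R.
        map (\<lambda>i. h (ar S R ! i) (xs ! i)) [0..<length xs] \<in> srel B R)"

definition homto :: "sig \<Rightarrow> 'a struct \<Rightarrow> 'b struct \<Rightarrow> bool" where
  "homto S A B \<longleftrightarrow> (\<exists>h. hom S A B h)"

text \<open>Single type 0; symbol 0 is the ternary addition relation, symbol b+1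
(for b < n) is the unary constant relation {b}.\<close>
definition zsig :: "nat \<Rightarrow> sig" where
  "zsig n = \<lparr> tys = {0}, syms = {0..n}, ar = (\<lambda>R. if R = 0 then [0,0,0] else [0]) \<rparr>"

definition zstruct :: "nat \<Rightarrow> nat struct" where
  "zstruct n = \<lparr> sdom = (\<lambda>_. {..<n}),
      srel = (\<lambda>R. if R = 0
                   then {[x1, x2, y] | x1 x2 y. x1 < n \<and> x2 < n \<and> y < n \<and> (x1 + x2) mod n = y}
                   else {[R - 1]}) \<rparr>"

datatype atom = Rel nat "nat list" | Eq nat nat

record rule =
  head_sym  :: nat
  head_vars :: "nat list"
  body      :: "atom list"
  vty       :: "nat \<Rightarrow> nat"

fun atom_vars :: "atom \<Rightarrow> nat set" where
  "atom_vars (Rel R vs) = set vs"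
| "atom_vars (Eq v w) = {v, w}"

definition rule_vars :: "rule \<Rightarrow> nat set" where
  "rule_vars r = set (head_vars r) \<union> (\<Union>a\<in>set (body r). atom_vars a)"

fun wt_atom :: "sig \<Rightarrow> (nat \<Rightarrow> nat) \<Rightarrow> atom \<Rightarrow> bool" where
  "wt_atom D ty (Rel R vs) \<longleftrightarrow> R \<in> syms D \<and> length vs = length (ar D R) \<and>
      (\<forall>i<length vs. ty (vs ! i) = ar D R ! i)"
| "wt_atom D ty (Eq v w) \<longleftrightarrow> ty v = ty w"

record dprog =
  psig   :: sig
  prules :: "rule list"
  pout   :: nat

definition wf_prog :: "sig \<Rightarrow> dprog \<Rightarrow> bool" where
  "wf_prog Pi P \<longleftrightarrow>
     wf_sig (psig P) \<and> tys (psig P) = tys Pi \<and> syms Pi \<subseteq> syms (psig P) \<and>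
     (\<forall>R\<in>syms Pi. ar (psig P) R = ar Pi R) \<and>
     pout P \<in> syms (psig P) \<and>
     (\<forall>r\<in>set (prules P).
        head_sym r \<notin> syms Pi \<and>
        wt_atom (psig P) (vty r) (Rel (head_sym r) (head_vars r)) \<and>
        (\<forall>a\<in>set (body r). wt_atom (psig P) (vty r) a) \<and>
        (\<forall>v\<in>rule_vars r. vty r v \<in> tys (psig P)))"

fun holds :: "(nat \<Rightarrow> 'a list set) \<Rightarrow> (nat \<Rightarrow> 'a) \<Rightarrow> atom \<Rightarrow> bool" where
  "holds I \<nu> (Rel R vs) \<longleftrightarrow> map \<nu> vs \<in> I R"
| "holds I \<nu> (Eq v w) \<longleftrightarrow> \<nu> v = \<nu> w"

definition full_rels :: "sig \<Rightarrow> 'a struct \<Rightarrow> (nat \<Rightarrow> 'a list set) \<Rightarrow> nat \<Rightarrow> 'a list set" where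
  "full_rels Pi A I = (\<lambda>R. if R \<in> syms Pi then srel A R else I R)"

definition dl_step :: "sig \<Rightarrow> dprog \<Rightarrow> 'a struct \<Rightarrow> (nat \<Rightarrow> 'a list set) \<Rightarrow> nat \<Rightarrow> 'a list set" where
  "dl_step Pi P A I = (\<lambda>R. {map \<nu> (head_vars r) | r \<nu>.
       r \<in> set (prules P) \<and> head_sym r = R \<and>
       (\<forall>v\<in>rule_vars r. \<nu> v \<in> sdom A (vty r v)) \<and>
       (\<forall>a\<in>set (body r). holds (full_rels Pi A I) \<nu> a)})"

definition dl_rels :: "sig \<Rightarrow> dprog \<Rightarrow> 'a struct \<Rightarrow> nat \<Rightarrow> 'a list set" where
  "dl_rels Pi P A = full_rels Pi A (lfp (dl_step Pi P A))"

definition dl_out :: "sig \<Rightarrow> dprog \<Rightarrow> 'a struct \<Rightarrow> 'a list set" where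
  "dl_out Pi P A = dl_rels Pi P A (pout P)"

definition outar :: "dprog \<Rightarrow> nat list" where
  "outar P = ar (psig P) (pout P)"

record dint =
  dt :: "nat \<Rightarrow> dprog"
  dr :: "nat \<Rightarrow> dprog"

definition wf_dint :: "sig \<Rightarrow> sig \<Rightarrow> dint \<Rightarrow> bool" where
  "wf_dint Pi Sg phi \<longleftrightarrow> wf_sig Pi \<and> wf_sig Sg \<and>
     (\<forall>t\<in>tys Sg. wf_prog Pi (dt phi t)) \<and>
     (\<forall>R\<in>syms Sg. wf_prog Pi (dr phi R) \<and>
        outar (dr phi R) = concat (map (\<lambda>t. outar (dt phi t)) (ar Sg R)))"

definition apply_dint :: "sig \<Rightarrow> sig \<Rightarrow> dint \<Rightarrow> 'a struct \<Rightarrow> 'a list struct" where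
  "apply_dint Pi Sg phi A =
     \<lparr> sdom = (\<lambda>t. dl_out Pi (dt phi t) A),
       srel = (\<lambda>R. {ws. length ws = length (ar Sg R) \<and>
                    (\<forall>i<length ws. ws ! i \<in> dl_out Pi (dt phi (ar Sg R ! i)) A) \<and>
                    concat ws \<in> dl_out Pi (dr phi R) A}) \<rparr>"

record ugad =
  ud :: "nat \<Rightarrow> nat"
  ur :: "nat \<Rightarrow> nat"

definition wf_ugad :: "sig \<Rightarrow> sig \<Rightarrow> ugad \<Rightarrow> bool" where
  "wf_ugad Sg Sg' u \<longleftrightarrow>
     (\<forall>t\<in>tys Sg. ud u t \<in> tys Sg') \<and>
     (\<forall>R\<in>syms Sg. ur u R \<in> syms Sg' \<and> ar Sg' (ur u R) = map (ud u) (ar Sg R))"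

text \<open>Disjoint unions are realised by tagging each element with its source type.\<close>
definition apply_ugad :: "sig \<Rightarrow> ugad \<Rightarrow> 'b struct \<Rightarrow> (nat \<times> 'b) struct" where
  "apply_ugad Sg u A =
     \<lparr> sdom = (\<lambda>t. {(s, x). s \<in> tys Sg \<and> ud u s = t \<and> x \<in> sdom A s}),
       srel = (\<lambda>S. \<Union>R\<in>{R\<in>syms Sg. ur u R = S}.
                 (\<lambda>xs. map (\<lambda>i. (ar Sg R ! i, xs ! i)) [0..<length xs]) ` srel A R) \<rparr>"

text \<open>Instances are finite structures; w.l.o.g. (Datalog is isomorphism invariant)
their elements are natural numbers.\<close>
definition is_reduction ::
  "sig \<Rightarrow> 'a struct \<Rightarrow> sig \<Rightarrow> 'b struct \<Rightarrow> (nat struct \<Rightarrow> 'c struct) \<Rightarrow> bool" where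
  "is_reduction S A S' B psi \<longleftrightarrow>
     (\<forall>X::nat struct. is_struct S X \<and> finite_struct S X \<longrightarrow>
        (homto S X A \<longrightarrow> homto S' (psi X) B) \<and> (homto S' (psi X) B \<longrightarrow> homto S X A))"

definition dl_le :: "sig \<Rightarrow> 'a struct \<Rightarrow> sig \<Rightarrow> 'b struct \<Rightarrow> bool" where
  "dl_le S A S' B \<longleftrightarrow>
     (\<exists>Sg phi u. wf_dint S Sg phi \<and> wf_ugad Sg S' u \<and>
        is_reduction S A S' B (\<lambda>X. apply_ugad Sg u (apply_dint S Sg phi X)))"

end

theory Submission
  imports Defs "HOL-Library.FuncSet" "HOL-Library.Nat_Bijection" "HOL-Number_Theory.Cong"
begin


lemma holds_mono: "(\<And>R. I R \<subseteq> J R) \<Longrightarrow> holds I \<nu> a \<Longrightarrow> holds J \<nu> a"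
  by (cases a) auto

lemma dl_step_mono: "mono (dl_step PiS P A)"
proof (rule monoI)
  fix I J :: "nat \<Rightarrow> 'a list set" assume "I \<le> J"
  hence "\<And>R. full_rels PiS A I R \<subseteq> full_rels PiS A J R"
    by (auto simp: full_rels_def le_fun_def)
  then show "dl_step PiS P A I \<le> dl_step PiS P A J"
    unfolding dl_step_def le_fun_def
    by (smt (verit, ccfv_threshold) Collect_mono_iff holds_mono)
qed

lemma finite_rule_vars: "finite (rule_vars r)"
proof -
  have "\<And>a. finite (atom_vars a)" by (case_tac a) auto
  thus ?thesis by (auto simp: rule_vars_def)
qed

lemma dl_transfer_lfp:
  fixes PiS :: sig and P :: dprog and X B :: "nat struct"
    and adm :: "nat set \<Rightarrow> (nat \<Rightarrow> nat) \<Rightarrow> bool" and K :: nat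
  assumes wf: "wf_prog PiS P"
  and tys: "tys PiS = {0}"
  and Kb: "\<forall>r\<in>set (prules P). card (rule_vars r) \<le> K"
  and a1: "\<And>S F x. adm S F \<Longrightarrow> x \<in> sdom X 0 \<Longrightarrow> F x \<in> sdom B 0"
  and a1': "\<And>S F R t. adm S F \<Longrightarrow> R \<in> syms PiS \<Longrightarrow> t \<in> srel X R \<Longrightarrow> set t \<subseteq> S \<Longrightarrow> map F t \<in> srel B R"
  and a2: "\<And>T S F. adm T F \<Longrightarrow> T \<subseteq> S \<Longrightarrow> finite S \<Longrightarrow> card S \<le> K \<Longrightarrow> \<exists>F'. adm S F' \<and> (\<forall>x\<in>T. F' x = F x)"
  and a3: "\<And>T S F. adm S F \<Longrightarrow> T \<subseteq> S \<Longrightarrow> adm T F"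
  shows "lfp (dl_step PiS P X) \<le> (\<lambda>R. {as. card (set as) \<le> K \<and> (\<forall>F. adm (set as) F \<longrightarrow> map F as \<in> lfp (dl_step PiS P B) R)})"
    (is "_ \<le> ?Phi")
proof (rule lfp_lowerbound)
  let ?LB = "lfp (dl_step PiS P B)"
  have fixB: "dl_step PiS P B ?LB = ?LB" using lfp_fixpoint[OF dl_step_mono] .
  show "dl_step PiS P X ?Phi \<le> ?Phi"
  proof (rule le_funI, rule subsetI)
    fix R as assume "as \<in> dl_step PiS P X ?Phi R"
    then obtain r \<nu> where asd: "as = map \<nu> (head_vars r)" and r: "r \<in> set (prules P)" and hs: "head_sym r = R"
      and nu: "\<forall>v\<in>rule_vars r. \<nu> v \<in> sdom X (vty r v)"
      and bd: "\<forall>a\<in>set (body r). holds (full_rels PiS X ?Phi) \<nu> a"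
      unfolding dl_step_def by blast
    let ?U = "\<nu> ` rule_vars r"
    have finU: "finite ?U" using finite_rule_vars by simp
    have cardU: "card ?U \<le> K" using Kb r card_image_le[OF finite_rule_vars, of \<nu> r] by force
    have hsub: "set as \<subseteq> ?U" using asd by (auto simp: rule_vars_def)
    have cas: "card (set as) \<le> K" using card_mono[OF finU hsub] cardU by simp
    have vty0: "\<And>v. v \<in> rule_vars r \<Longrightarrow> vty r v = 0"
      using wf r tys unfolding wf_prog_def by auto
    have nu0: "\<And>v. v \<in> rule_vars r \<Longrightarrow> \<nu> v \<in> sdom X 0" using nu vty0 by force
    have "\<forall>F. adm (set as) F \<longrightarrow> map F as \<in> ?LB R"
    proof (intro allI impI)
      fix F assume aF: "adm (set as) F"
      obtain F' where aF': "adm ?U F'" and agr: "\<forall>x\<in>set as. F' x = F x"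
        using a2[OF aF hsub finU cardU] by blast
      let ?nu = "F' \<circ> \<nu>"
      have "\<forall>v\<in>rule_vars r. ?nu v \<in> sdom B (vty r v)"
        using a1[OF aF'] nu0 vty0 by auto
      moreover have "\<forall>a\<in>set (body r). holds (full_rels PiS B ?LB) ?nu a"
      proof
        fix a assume ain: "a \<in> set (body r)"
        have avars: "atom_vars a \<subseteq> rule_vars r" using ain by (auto simp: rule_vars_def)
        show "holds (full_rels PiS B ?LB) ?nu a"
        proof (cases a)
          case (Rel R' vs)
          have hx: "map \<nu> vs \<in> full_rels PiS X ?Phi R'" using bd ain Rel by auto
          have sub: "set (map \<nu> vs) \<subseteq> ?U" using avars Rel by auto
          show ?thesis
          proof (cases "R' \<in> syms PiS")
            case True
            hence "map \<nu> vs \<in> srel X R'" using hx by (simp add: full_rels_def)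
            from a1'[OF aF' True this sub] show ?thesis using Rel True by (simp add: full_rels_def)
          next
            case False
            hence "map \<nu> vs \<in> ?Phi R'" using hx by (simp add: full_rels_def)
            moreover have "adm (set (map \<nu> vs)) F'" using a3[OF aF' sub] .
            ultimately have "map F' (map \<nu> vs) \<in> ?LB R'" by blast
            thus ?thesis using Rel False by (simp add: full_rels_def)
          qed
        next
          case (Eq v w)
          thus ?thesis using bd ain by auto
        qed
      qed
      ultimately have "map ?nu (head_vars r) \<in> dl_step PiS P B ?LB R"
        unfolding dl_step_def using r hs by blast
      hence "map ?nu (head_vars r) \<in> ?LB R" using fixB by simp
      moreover have "map ?nu (head_vars r) = map F as"
        using agr asd by auto
      ultimately show "map F as \<in> ?LB R" by simp
    qed
    thus "as \<in> ?Phi R" using cas by simp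
  qed
qed

lemma dl_transfer_out:
  fixes PiS :: sig and P :: dprog and X B :: "nat struct"
    and adm :: "nat set \<Rightarrow> (nat \<Rightarrow> nat) \<Rightarrow> bool" and K :: nat
  assumes wf: "wf_prog PiS P"
  and tys: "tys PiS = {0}"
  and Kb: "\<forall>r\<in>set (prules P). card (rule_vars r) \<le> K"
  and Kx: "\<forall>R\<in>syms PiS. \<forall>t\<in>srel X R. card (set t) \<le> K"
  and a1: "\<And>S F x. adm S F \<Longrightarrow> x \<in> sdom X 0 \<Longrightarrow> F x \<in> sdom B 0"
  and a1': "\<And>S F R t. adm S F \<Longrightarrow> R \<in> syms PiS \<Longrightarrow> t \<in> srel X R \<Longrightarrow> set t \<subseteq> S \<Longrightarrow> map F t \<in> srel B R"
  and a2: "\<And>T S F. adm T F \<Longrightarrow> T \<subseteq> S \<Longrightarrow> finite S \<Longrightarrow> card S \<le> K \<Longrightarrow> \<exists>F'. adm S F' \<and> (\<forall>x\<in>T. F' x = F x)"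
  and a3: "\<And>T S F. adm S F \<Longrightarrow> T \<subseteq> S \<Longrightarrow> adm T F"
  and as: "as \<in> dl_out PiS P X"
  shows "card (set as) \<le> K" and "adm (set as) F \<Longrightarrow> map F as \<in> dl_out PiS P B"
proof -
  have L: "lfp (dl_step PiS P X) \<le> (\<lambda>R. {as. card (set as) \<le> K \<and> (\<forall>F. adm (set as) F \<longrightarrow> map F as \<in> lfp (dl_step PiS P B) R)})"
    by (rule dl_transfer_lfp[OF wf tys Kb], (rule a1; assumption), (rule a1'; assumption), (rule a2; assumption), (rule a3; assumption))
  show "card (set as) \<le> K"
  proof (cases "pout P \<in> syms PiS")
    case True thus ?thesis using as Kx by (auto simp: dl_out_def dl_rels_def full_rels_def)
  next
    case False thus ?thesis using as L by (auto simp: dl_out_def dl_rels_def full_rels_def le_fun_def)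
  qed
  assume aF: "adm (set as) F"
  show "map F as \<in> dl_out PiS P B"
  proof (cases "pout P \<in> syms PiS")
    case True thus ?thesis using as a1'[OF aF True] by (auto simp: dl_out_def dl_rels_def full_rels_def)
  next
    case False thus ?thesis using as L aF by (auto simp: dl_out_def dl_rels_def full_rels_def le_fun_def)
  qed
qed


definition sv :: "nat \<Rightarrow> nat \<Rightarrow> nat" where "sv i k = 2 * prod_encode (i,k)"
definition cv :: "nat \<Rightarrow> nat \<Rightarrow> nat" where "cv i j = Suc (2 * prod_encode (min i j, max i j))"

lemma sv_inj[simp]: "sv i k = sv i' k' \<longleftrightarrow> i = i' \<and> k = k'"
  by (auto simp: sv_def)
lemma cv_sv[simp]: "cv i j \<noteq> sv a b" "sv a b \<noteq> cv i j"
  unfolding sv_def cv_def by presburger+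
lemma cv_eq: "cv i j = cv a b \<longleftrightarrow> (i = a \<and> j = b) \<or> (i = b \<and> j = a)"
  by (auto simp: cv_def min_def max_def split: if_splits)
lemma cv_sym: "cv i j = cv j i"
  by (auto simp: cv_def min_def max_def)
definition VV :: "nat \<Rightarrow> nat set" where
  "VV n = {sv i k | i k. i \<in> {..<n} \<and> k \<in> {..n}} \<union> {cv i j | i j. i \<in> {..<n} \<and> j \<in> {..<n}}"

lemma finite_VV: "finite (VV n)"
  unfolding VV_def by (intro finite_UnI finite_image_set2) auto

lemma sv_VV[simp]: "i < n \<Longrightarrow> k \<le> n \<Longrightarrow> sv i k \<in> VV n"
  unfolding VV_def by blast
lemma cv_VV[simp]: "i < n \<Longrightarrow> j < n \<Longrightarrow> cv i j \<in> VV n"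
  unfolding VV_def by blast
definition tern :: "nat \<Rightarrow> nat list set" where
  "tern n = {[sv i j, cv i j, sv i (Suc j)] | i j. i<n \<and> j<n \<and> i \<le> j}
          \<union> {[sv i (Suc j), cv i j, sv i j] | i j. i<n \<and> j<n \<and> j < i}"
definition un0 :: "nat \<Rightarrow> nat list set" where
  "un0 n = {[sv i 0] | i. i<n} \<union> {[cv i i] | i. i<n} \<union> {[sv i n] | i. 0<i \<and> i<n}"
definition XX :: "nat \<Rightarrow> nat struct" where
  "XX n = \<lparr>sdom = (\<lambda>_. VV n), srel = (\<lambda>R. if R=0 then tern n else if R=1 then un0 n
          else if R=2 then {[sv 0 n]} else {})\<rparr>"

definition cons_ok :: "nat \<Rightarrow> nat \<Rightarrow> (nat \<Rightarrow> nat) \<Rightarrow> bool" where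
  "cons_ok p n F = (\<forall>i<n. \<forall>j<n. (if i \<le> j then (F (sv i j) + F (cv i j)) mod p = F (sv i (Suc j))
                       else (F (sv i (Suc j)) + F (cv i j)) mod p = F (sv i j)))"

lemma hom_tuple: "(\<forall>k<length xs. ar S R ! k = 0) \<Longrightarrow>
   map (\<lambda>k. h (ar S R ! k) (xs ! k)) [0..<length xs] = map (h 0) xs"
  by (rule nth_equalityI) auto

lemma ar_zsig: "k < length (ar (zsig p) R) \<Longrightarrow> ar (zsig p) R ! k = 0"
proof -
  have "ar (zsig p) R = (if R = 0 then [0,0,0] else [0])" by (simp add: zsig_def)
  moreover assume "k < length (ar (zsig p) R)"
  ultimately show ?thesis by (auto simp: nth_Cons split: nat.splits if_splits)
qed


lemma hom_rel: "hom (zsig p) X (zstruct p) h \<Longrightarrow> R \<in> {0..p} \<Longrightarrow> t \<in> srel X R \<Longrightarrow>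
   length t = length (ar (zsig p) R) \<Longrightarrow> map (h 0) t \<in> srel (zstruct p) R"
proof -
  assume h: "hom (zsig p) X (zstruct p) h" and R: "R \<in> {0..p}" and t: "t \<in> srel X R"
    and l: "length t = length (ar (zsig p) R)"
  have "R \<in> syms (zsig p)" using R by (simp add: zsig_def)
  hence "map (\<lambda>i. h (ar (zsig p) R ! i) (t ! i)) [0..<length t] \<in> srel (zstruct p) R"
    using h t unfolding hom_def by blast
  moreover have "\<forall>k<length t. ar (zsig p) R ! k = 0" using l ar_zsig by auto
  ultimately show ?thesis using hom_tuple by metis
qed

lemma XX_len: "R \<in> {0..p} \<Longrightarrow> t \<in> srel (XX n) R \<Longrightarrow> length t = length (ar (zsig p) R)"
  unfolding XX_def tern_def un0_def zsig_def by (auto split: if_splits)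
lemma mod_cong_int: "(a + c) mod p = (b::nat) \<Longrightarrow> [int b = int a + int c] (mod int p)"
proof -
  assume e: "(a + c) mod p = b"
  have "int b = (int a + int c) mod int p" using e[symmetric] by (simp add: of_nat_mod)
  thus ?thesis by (simp add: cong_def)
qed
lemma t1: fixes a :: "nat \<Rightarrow> nat \<Rightarrow> int" assumes anti: "\<And>i j. i < n \<Longrightarrow> j < n \<Longrightarrow> a j i = - a i j"
  shows "(\<Sum>i<n. \<Sum>j<n. a i j) = 0"
proof -
  define S where "S = (\<Sum>i<n. \<Sum>j<n. a i j)"
  have "S = (\<Sum>j<n. \<Sum>i<n. a i j)" unfolding S_def by (rule sum.swap)
  also have "\<dots> = (\<Sum>j<n. \<Sum>i<n. - a j i)" by (rule sum.cong[OF refl], rule sum.cong[OF refl], subst anti) auto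
  also have "\<dots> = - S" by (simp add: S_def sum_negf)
  finally show ?thesis unfolding S_def by simp
qed

lemma XX_unsat:
  assumes p: "prime p" and n: "0 < n"
  shows "\<not> homto (zsig p) (XX n) (zstruct p)"
proof
  assume "homto (zsig p) (XX n) (zstruct p)"
  then obtain h where h: "hom (zsig p) (XX n) (zstruct p) h" by (auto simp: homto_def)
  define F where "F = h 0"
  have p1: "1 < p" using p prime_gt_1_nat by blast
  have rel: "\<And>R t. R \<in> {0..p} \<Longrightarrow> t \<in> srel (XX n) R \<Longrightarrow> map F t \<in> srel (zstruct p) R"
    unfolding F_def using hom_rel[OF h] XX_len by blast
  have tr: "\<And>i j. i < n \<Longrightarrow> j < n \<Longrightarrow> (if i \<le> j then (F (sv i j) + F (cv i j)) mod p = F (sv i (Suc j))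
                       else (F (sv i (Suc j)) + F (cv i j)) mod p = F (sv i j))"
  proof -
    fix i j assume ij: "i < n" "j < n"
    show "?thesis i j"
    proof (cases "i \<le> j")
      case True
      hence "[sv i j, cv i j, sv i (Suc j)] \<in> tern n" unfolding tern_def using ij by blast
      hence "[sv i j, cv i j, sv i (Suc j)] \<in> srel (XX n) 0" by (simp add: XX_def)
      from rel[OF _ this] show ?thesis using True by (simp add: zstruct_def)
    next
      case False
      hence "[sv i (Suc j), cv i j, sv i j] \<in> tern n" unfolding tern_def using ij by force
      hence "[sv i (Suc j), cv i j, sv i j] \<in> srel (XX n) 0" by (simp add: XX_def)
      from rel[OF _ this] show ?thesis using False by (simp add: zstruct_def)
    qed
  qed
  have u0: "\<And>t. t \<in> un0 n \<Longrightarrow> map F t = [0]"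
  proof -
    fix t assume "t \<in> un0 n"
    hence "t \<in> srel (XX n) 1" by (simp add: XX_def)
    from rel[OF _ this] show "map F t = [0]" using p1 by (simp add: zstruct_def)
  qed
  have cii: "\<And>i. i < n \<Longrightarrow> F (cv i i) = 0"
  proof -
    fix i assume "i < n" hence "[cv i i] \<in> un0 n" unfolding un0_def by blast
    from u0[OF this] show "F (cv i i) = 0" by simp
  qed
  have sin: "\<And>i. 0 < i \<Longrightarrow> i < n \<Longrightarrow> F (sv i n) = 0"
  proof -
    fix i assume "0 < i" "i < n" hence "[sv i n] \<in> un0 n" unfolding un0_def by blast
    from u0[OF this] show "F (sv i n) = 0" by simp
  qed
  have si0: "\<And>i. i < n \<Longrightarrow> F (sv i 0) = 0"
  proof -
    fix i assume "i < n" hence "[sv i 0] \<in> un0 n" unfolding un0_def by blast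
    from u0[OF this] show "F (sv i 0) = 0" by simp
  qed
  have s0n: "F (sv 0 n) = 1"
  proof -
    have "[sv 0 n] \<in> srel (XX n) 2" by (simp add: XX_def)
    from rel[OF _ this] show ?thesis using p1 by (simp add: zstruct_def)
  qed
  define a where "a i j = (if i \<le> j then int (F (cv i j)) else - int (F (cv i j)))" for i j
  define S where "S = (\<Sum>i<n. \<Sum>j<n. a i j)"
  have chain: "\<And>i k. i < n \<Longrightarrow> k \<le> n \<Longrightarrow> [int (F (sv i k)) = (\<Sum>j<k. a i j)] (mod int p)"
  proof -
    fix i k assume i: "i < n" show "k \<le> n \<Longrightarrow> [int (F (sv i k)) = (\<Sum>j<k. a i j)] (mod int p)"
    proof (induction k)
      case 0 thus ?case using si0[OF i] by simp
    next
      case (Suc k)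
      hence IH: "[int (F (sv i k)) = (\<Sum>j<k. a i j)] (mod int p)" by simp
      have kn: "k < n" using Suc by simp
      show ?case
      proof (cases "i \<le> k")
        case True
        hence e: "(F (sv i k) + F (cv i k)) mod p = F (sv i (Suc k))" using tr[OF i kn] by simp
        have "[int (F (sv i (Suc k))) = int (F (sv i k)) + int (F (cv i k))] (mod int p)"
          using mod_cong_int[OF e] .
        moreover have "[int (F (sv i k)) + int (F (cv i k)) = (\<Sum>j<k. a i j) + a i k] (mod int p)"
          using IH True unfolding a_def by (simp add: cong_add)
        ultimately have "[int (F (sv i (Suc k))) = (\<Sum>j<k. a i j) + a i k] (mod int p)" by (rule cong_trans)
        thus ?thesis by simp
      next
        case False
        hence e: "(F (sv i (Suc k)) + F (cv i k)) mod p = F (sv i k)" using tr[OF i kn] by simp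
        have h1: "[int (F (sv i k)) = int (F (sv i (Suc k))) + int (F (cv i k))] (mod int p)"
          using mod_cong_int[OF e] .
        have "[int (F (sv i k)) - int (F (cv i k)) = int (F (sv i (Suc k)))] (mod int p)"
          using cong_diff[OF h1 cong_refl[of "int (F (cv i k))"]] by simp
        moreover have "[int (F (sv i k)) - int (F (cv i k)) = (\<Sum>j<k. a i j) + a i k] (mod int p)"
          using IH False unfolding a_def by (simp add: cong_diff)
        ultimately have "[int (F (sv i (Suc k))) = (\<Sum>j<k. a i j) + a i k] (mod int p)" by (meson cong_sym cong_trans)
        thus ?thesis by simp
      qed
    qed
  qed
  have anti: "\<And>i j. i < n \<Longrightarrow> j < n \<Longrightarrow> a j i = - a i j"
  proof -
    fix i j assume ij: "i < n" "j < n"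
    have c: "cv j i = cv i j" by (rule cv_sym)
    show "a j i = - a i j"
    proof (cases "i = j")
      case True thus ?thesis using cii[OF ij(1)] unfolding a_def by simp
    next
      case False thus ?thesis unfolding a_def c by auto
    qed
  qed
  have S0: "S = 0" unfolding S_def by (rule t1[OF anti])
  have "[(\<Sum>i<n. int (F (sv i n))) = S] (mod int p)"
    unfolding S_def by (rule cong_sum) (use chain in auto)
  moreover have "(\<Sum>i<n. int (F (sv i n))) = 1"
  proof -
    have "(\<Sum>i<n. int (F (sv i n))) = (\<Sum>i\<in>{0}. int (F (sv i n)))"
      using n sin by (intro sum.mono_neutral_right) auto
    thus ?thesis using s0n by simp
  qed
  ultimately have "[1 = 0] (mod int p)" using S0 by simp
  thus False using p1 by (simp add: cong_def)
qed


lemma XX_elems: "0 < n \<Longrightarrow> t \<in> srel (XX n) R \<Longrightarrow> set t \<subseteq> VV n"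
  unfolding XX_def tern_def un0_def by (auto split: if_splits)

lemma XX_struct: "0 < n \<Longrightarrow> is_struct (zsig p) (XX n) \<and> finite_struct (zsig p) (XX n)"
proof -
  assume n: "0 < n"
  have "is_struct (zsig p) (XX n)"
    unfolding is_struct_def
  proof (intro ballI conjI allI impI)
    fix R xs assume R: "R \<in> syms (zsig p)" and xs: "xs \<in> srel (XX n) R"
    have R': "R \<in> {0..p}" using R by (simp add: zsig_def)
    show "length xs = length (ar (zsig p) R)" using XX_len[OF R' xs] .
    fix i assume "i < length xs"
    hence "xs ! i \<in> VV n" using XX_elems[OF n xs] nth_mem by blast
    thus "xs ! i \<in> sdom (XX n) (ar (zsig p) R ! i)" by (simp add: XX_def)
  qed
  moreover have "finite_struct (zsig p) (XX n)" by (simp add: finite_struct_def XX_def finite_VV)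
  ultimately show ?thesis ..
qed


definition fadd :: "nat \<Rightarrow> 'a set \<Rightarrow> ('a \<Rightarrow> nat) \<Rightarrow> ('a \<Rightarrow> nat) \<Rightarrow> 'a \<Rightarrow> nat" where
  "fadd p A f g = restrict (\<lambda>x. (f x + g x) mod p) A"
definition fneg :: "nat \<Rightarrow> 'a set \<Rightarrow> ('a \<Rightarrow> nat) \<Rightarrow> 'a \<Rightarrow> nat" where
  "fneg p A f = restrict (\<lambda>x. (p - f x) mod p) A"

lemma fadd_in: "0 < p \<Longrightarrow> fadd p A f g \<in> A \<rightarrow>\<^sub>E {..<p}"
  by (auto simp: fadd_def)

lemma fadd_comm: "fadd p A f g = fadd p A g f"
  by (auto simp: fadd_def add.commute)

lemma fadd_assoc: "f \<in> A \<rightarrow>\<^sub>E {..<p} \<Longrightarrow> g \<in> A \<rightarrow>\<^sub>E {..<p} \<Longrightarrow> h \<in> A \<rightarrow>\<^sub>E {..<p} \<Longrightarrow>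
  fadd p A (fadd p A f g) h = fadd p A f (fadd p A g h)"
  by (rule ext) (simp add: fadd_def mod_add_left_eq mod_add_right_eq add.assoc)

lemma fadd_zero: "f \<in> A \<rightarrow>\<^sub>E {..<p} \<Longrightarrow> fadd p A f (restrict (\<lambda>_. 0) A) = f"
  by (rule ext) (auto simp: fadd_def PiE_def extensional_def Pi_def)

lemma fadd_neg: "0 < p \<Longrightarrow> f \<in> A \<rightarrow>\<^sub>E {..<p} \<Longrightarrow> fadd p A f (fneg p A f) = restrict (\<lambda>_. 0) A"
proof (rule ext)
  fix x assume p: "0 < p" and f: "f \<in> A \<rightarrow>\<^sub>E {..<p}"
  show "fadd p A f (fneg p A f) x = restrict (\<lambda>_. 0) A x"
  proof (cases "x \<in> A")
    case True
    hence fx: "f x < p" using f by auto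
    have "(f x + (p - f x) mod p) mod p = (f x + (p - f x)) mod p" by (simp add: mod_add_right_eq)
    also have "\<dots> = 0" using fx by simp
    finally show ?thesis using True by (simp add: fadd_def fneg_def)
  qed (simp add: fadd_def)
qed

lemma fadd_cancel: "f \<in> A \<rightarrow>\<^sub>E {..<p} \<Longrightarrow> g \<in> A \<rightarrow>\<^sub>E {..<p} \<Longrightarrow> h \<in> A \<rightarrow>\<^sub>E {..<p} \<Longrightarrow>
  fadd p A h f = fadd p A h g \<Longrightarrow> f = g"
proof (rule ext)
  fix x assume f: "f \<in> A \<rightarrow>\<^sub>E {..<p}" and g: "g \<in> A \<rightarrow>\<^sub>E {..<p}" and h: "h \<in> A \<rightarrow>\<^sub>E {..<p}"
    and e: "fadd p A h f = fadd p A h g"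
  show "f x = g x"
  proof (cases "x \<in> A")
    case True
    have "(h x + f x) mod p = (h x + g x) mod p" using fun_cong[OF e, of x] True by (simp add: fadd_def)
    hence "f x mod p = g x mod p" by (metis cong_add_lcancel_nat cong_def)
    moreover have "f x < p" "g x < p" using True f g by auto
    ultimately show ?thesis by simp
  next
    case False thus ?thesis using f g by (auto simp: PiE_def extensional_def)
  qed
qed

lemma subgroup_card_dvd:
  fixes L :: "('a \<Rightarrow> nat) set"
  assumes p: "0 < p" and A: "finite A" and LF: "L \<subseteq> A \<rightarrow>\<^sub>E {..<p}"
  and add: "\<And>f g. f \<in> L \<Longrightarrow> g \<in> L \<Longrightarrow> fadd p A f g \<in> L"
  and neg: "\<And>f. f \<in> L \<Longrightarrow> fneg p A f \<in> L"
  and zero: "restrict (\<lambda>_. 0) A \<in> L"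
  shows "card L dvd p ^ card A"
proof -
  let ?F = "A \<rightarrow>\<^sub>E {..<p}"
  let ?C = "\<lambda>g. fadd p A g ` L"
  have finF: "finite ?F" using A by (simp add: finite_PiE)
  have cardF: "card ?F = p ^ card A" using A by (simp add: card_PiE)
  have Lin: "\<And>f. f \<in> L \<Longrightarrow> f \<in> ?F" using LF by auto
  have Cs: "\<And>g. ?C g \<subseteq> ?F" by (simp add: image_subset_iff fadd_in[OF p])
  have union: "\<Union> (?C ` ?F) = ?F"
  proof
    show "\<Union> (?C ` ?F) \<subseteq> ?F" using Cs by blast
    show "?F \<subseteq> \<Union> (?C ` ?F)"
    proof
      fix g assume g: "g \<in> ?F"
      have "g = fadd p A g (restrict (\<lambda>_. 0) A)" using fadd_zero[OF g] by simp
      hence "g \<in> ?C g" using zero by blast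
      thus "g \<in> \<Union> (?C ` ?F)" using g by blast
    qed
  qed
  have cardC: "\<And>g. g \<in> ?F \<Longrightarrow> card (?C g) = card L"
  proof -
    fix g assume g: "g \<in> ?F"
    have "inj_on (fadd p A g) L"
      by (rule inj_onI, rule fadd_cancel[OF Lin Lin g]) auto
    thus "card (?C g) = card L" by (rule card_image)
  qed
  have sub: "\<And>g g'. g \<in> ?F \<Longrightarrow> g' \<in> ?F \<Longrightarrow> ?C g \<inter> ?C g' \<noteq> {} \<Longrightarrow> ?C g \<subseteq> ?C g'"
  proof -
    fix g g' assume g: "g \<in> ?F" and g': "g' \<in> ?F" and ne: "?C g \<inter> ?C g' \<noteq> {}"
    then obtain l1 l2 where l1: "l1 \<in> L" and l2: "l2 \<in> L" and e: "fadd p A g l1 = fadd p A g' l2" by blast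
    define m where "m = fadd p A l2 (fneg p A l1)"
    have mL: "m \<in> L" unfolding m_def using add neg l1 l2 by blast
    have nl1: "fneg p A l1 \<in> ?F" using Lin neg l1 by blast
    have gm: "g = fadd p A g' m"
    proof -
      have "g = fadd p A g (restrict (\<lambda>_. 0) A)" using fadd_zero[OF g] by simp
      also have "\<dots> = fadd p A g (fadd p A l1 (fneg p A l1))" using fadd_neg[OF p Lin[OF l1]] by simp
      also have "\<dots> = fadd p A (fadd p A g l1) (fneg p A l1)"
        using fadd_assoc[OF g Lin[OF l1] nl1] by simp
      also have "\<dots> = fadd p A (fadd p A g' l2) (fneg p A l1)" using e by simp
      also have "\<dots> = fadd p A g' m" unfolding m_def using fadd_assoc[OF g' Lin[OF l2] nl1] by simp
      finally show ?thesis .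
    qed
    show "?C g \<subseteq> ?C g'"
    proof
      fix x assume "x \<in> ?C g"
      then obtain l where l: "l \<in> L" and x: "x = fadd p A g l" by blast
      have "x = fadd p A g' (fadd p A m l)" using x gm fadd_assoc[OF g' Lin[OF mL] Lin[OF l]] by simp
      thus "x \<in> ?C g'" using add[OF mL l] by blast
    qed
  qed
  have disj: "\<forall>c1\<in>?C ` ?F. \<forall>c2\<in>?C ` ?F. c1 \<noteq> c2 \<longrightarrow> c1 \<inter> c2 = {}"
  proof (intro ballI impI)
    fix c1 c2 assume c1: "c1 \<in> ?C ` ?F" and c2: "c2 \<in> ?C ` ?F" and ne: "c1 \<noteq> c2"
    then obtain g g' where g: "g \<in> ?F" and g': "g' \<in> ?F" and "c1 = ?C g" "c2 = ?C g'" by blast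
    thus "c1 \<inter> c2 = {}" using sub[OF g g'] sub[OF g' g] ne by blast
  qed
  have fin1: "finite (?C ` ?F)" by (rule finite_imageI[OF finF])
  have fin2: "finite (\<Union> (?C ` ?F))" by (subst union, rule finF)
  have cc: "\<forall>c\<in>?C ` ?F. card c = card L" by (simp add: cardC)
  have "card L * card (?C ` ?F) = card (\<Union> (?C ` ?F))"
    using card_partition[OF fin1 fin2 cc[rule_format] disj[rule_format]] .
  hence "card L * card (?C ` ?F) = p ^ card A" unfolding union cardF .
  thus ?thesis by (metis dvd_triv_left)
qed


definition tgt :: "nat \<Rightarrow> nat \<Rightarrow> nat \<Rightarrow> nat" where
  "tgt p d i = (if i = d then (if i = 0 then 0 else p - 1) else (if i = 0 then 1 else 0))"

definition WW :: "nat \<Rightarrow> nat \<Rightarrow> nat \<Rightarrow> (nat \<Rightarrow> nat) set" where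
  "WW n p d = {F \<in> VV n \<rightarrow>\<^sub>E {..<p}. cons_ok p n F \<and>
      (\<forall>i<n. F (sv i 0) = 0 \<and> F (cv i i) = 0 \<and> F (sv i n) = tgt p d i)}"

definition dlt :: "nat \<Rightarrow> nat \<Rightarrow> nat \<Rightarrow> nat \<Rightarrow> nat \<Rightarrow> nat" where
  "dlt n p d e x = (if x = cv d e then (if d < e then 1 else p - 1)
     else if (\<exists>k. e < k \<and> k \<le> n \<and> x = sv d k) then 1
     else if (\<exists>k. d < k \<and> k \<le> n \<and> x = sv e k) then p - 1 else 0)"

definition mv :: "nat \<Rightarrow> nat \<Rightarrow> nat \<Rightarrow> nat \<Rightarrow> (nat \<Rightarrow> nat) \<Rightarrow> nat \<Rightarrow> nat" where
  "mv n p d e F = restrict (\<lambda>x. (F x + dlt n p d e x) mod p) (VV n)"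

lemma dlt_sv: "d \<noteq> e \<Longrightarrow> k \<le> n \<Longrightarrow>
  dlt n p d e (sv i k) = (if i = d \<and> e < k then 1 else if i = e \<and> d < k then p - 1 else 0)"
  unfolding dlt_def by auto

lemma dlt_cv: "dlt n p d e (cv i j) = (if (i = d \<and> j = e) \<or> (i = e \<and> j = d) then (if d < e then 1 else p - 1) else 0)"
  unfolding dlt_def by (auto simp: cv_eq)

lemma modstep: "(a + b) mod p = (c::nat) \<Longrightarrow> (u + v) mod p = w mod p \<Longrightarrow>
   ((a+u) mod p + (b+v) mod p) mod p = (c + w) mod p"
proof -
  assume e1: "(a + b) mod p = c" and e2: "(u + v) mod p = w mod p"
  have "((a+u) mod p + (b+v) mod p) mod p = ((a + b) + (u + v)) mod p"
    by (simp add: mod_add_eq add_ac)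
  also have "\<dots> = ((a + b) mod p + (u + v) mod p) mod p" by (simp add: mod_add_eq)
  also have "\<dots> = (c + w) mod p" using e1 e2 by (simp add: mod_add_right_eq)
  finally show ?thesis .
qed

lemma dlt_tern:
  assumes de: "d \<noteq> e" and j: "j < n" and p: "1 < p"
  shows "if i \<le> j then (dlt n p d e (sv i j) + dlt n p d e (cv i j)) mod p = dlt n p d e (sv i (Suc j)) mod p
         else (dlt n p d e (sv i (Suc j)) + dlt n p d e (cv i j)) mod p = dlt n p d e (sv i j) mod p"
proof -
  have j1: "j \<le> n" "Suc j \<le> n" using j by auto
  show ?thesis
    unfolding dlt_sv[OF de j1(1)] dlt_sv[OF de j1(2)] dlt_cv
    using de p by auto
qed

lemma WW_PiE: "F \<in> WW n p d \<Longrightarrow> F \<in> VV n \<rightarrow>\<^sub>E {..<p}"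
  by (simp add: WW_def)

lemma mv_val: "x \<in> VV n \<Longrightarrow> mv n p d e F x = (F x + dlt n p d e x) mod p"
  by (simp add: mv_def)

lemma mv_W:
  assumes p: "1 < p" and d: "d < n" and e: "e < n" and de: "d \<noteq> e" and F: "F \<in> WW n p d"
  shows "mv n p d e F \<in> WW n p e"
proof -
  let ?G = "mv n p d e F"
  let ?D = "dlt n p d e"
  have FP: "F \<in> VV n \<rightarrow>\<^sub>E {..<p}" and Fc: "cons_ok p n F"
    and Fu: "\<And>i. i < n \<Longrightarrow> F (sv i 0) = 0 \<and> F (cv i i) = 0 \<and> F (sv i n) = tgt p d i"
    using F by (auto simp: WW_def)
  have GP: "?G \<in> VV n \<rightarrow>\<^sub>E {..<p}" unfolding mv_def using p by auto
  have Gc: "cons_ok p n ?G"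
    unfolding cons_ok_def
  proof (intro allI impI)
    fix i j assume i: "i < n" and j: "j < n"
    have fc: "if i \<le> j then (F (sv i j) + F (cv i j)) mod p = F (sv i (Suc j))
                       else (F (sv i (Suc j)) + F (cv i j)) mod p = F (sv i j)"
      using Fc i j unfolding cons_ok_def by blast
    have dc: "if i \<le> j then (?D (sv i j) + ?D (cv i j)) mod p = ?D (sv i (Suc j)) mod p
         else (?D (sv i (Suc j)) + ?D (cv i j)) mod p = ?D (sv i j) mod p"
      using dlt_tern[OF de j p] .
    have m: "sv i j \<in> VV n" "sv i (Suc j) \<in> VV n" "cv i j \<in> VV n" using i j by auto
    show "if i \<le> j then (?G (sv i j) + ?G (cv i j)) mod p = ?G (sv i (Suc j))
                       else (?G (sv i (Suc j)) + ?G (cv i j)) mod p = ?G (sv i j)"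
    proof (cases "i \<le> j")
      case True
      from modstep[of "F (sv i j)" "F (cv i j)" p "F (sv i (Suc j))" "?D (sv i j)" "?D (cv i j)" "?D (sv i (Suc j))"]
      show ?thesis using True fc dc by (simp add: mv_val m)
    next
      case False
      from modstep[of "F (sv i (Suc j))" "F (cv i j)" p "F (sv i j)" "?D (sv i (Suc j))" "?D (cv i j)" "?D (sv i j)"]
      show ?thesis using False fc dc by (simp add: mv_val m)
    qed
  qed
  have Gu: "\<And>i. i < n \<Longrightarrow> ?G (sv i 0) = 0 \<and> ?G (cv i i) = 0 \<and> ?G (sv i n) = tgt p e i"
  proof -
    fix i assume i: "i < n"
    have m: "sv i 0 \<in> VV n" "cv i i \<in> VV n" "sv i n \<in> VV n" using i by auto
    have a1: "?G (sv i 0) = 0" using Fu[OF i] dlt_sv[OF de, of 0 n p i] by (simp add: mv_val m)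
    have a2: "?G (cv i i) = 0" using Fu[OF i] de by (simp add: mv_val m dlt_cv)
    have a3: "?G (sv i n) = tgt p e i"
    proof -
      have "?G (sv i n) = (tgt p d i + ?D (sv i n)) mod p" using Fu[OF i] by (simp add: mv_val m)
      also have "\<dots> = tgt p e i"
        unfolding dlt_sv[OF de order_refl] tgt_def using p d e de by auto
      finally show ?thesis .
    qed
    show "?G (sv i 0) = 0 \<and> ?G (cv i i) = 0 \<and> ?G (sv i n) = tgt p e i" using a1 a2 a3 by blast
  qed
  show ?thesis unfolding WW_def using GP Gc Gu by blast
qed

lemma mv_inv:
  assumes p: "1 < p" and de: "d \<noteq> e" and F: "F \<in> VV n \<rightarrow>\<^sub>E {..<p}"
  shows "mv n p e d (mv n p d e F) = F"
proof (rule ext)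
  fix x show "mv n p e d (mv n p d e F) x = F x"
  proof (cases "x \<in> VV n")
    case False thus ?thesis using F by (simp add: mv_def PiE_def extensional_def)
  next
    case True
    have fx: "F x < p" using F True by auto
    have s: "(dlt n p d e x + dlt n p e d x) mod p = 0"
      unfolding dlt_def using p de by (auto simp: cv_sym)
    have "mv n p e d (mv n p d e F) x = ((F x + dlt n p d e x) mod p + dlt n p e d x) mod p"
      using True by (simp add: mv_val)
    also have "\<dots> = (F x + (dlt n p d e x + dlt n p e d x)) mod p" by (simp add: mod_add_left_eq add.assoc)
    also have "\<dots> = (F x + (dlt n p d e x + dlt n p e d x) mod p) mod p" by (simp add: mod_add_right_eq)
    also have "\<dots> = F x" using s fx by simp
    finally show ?thesis .
  qed
qed

lemma mv_keep:
  assumes F: "F \<in> VV n \<rightarrow>\<^sub>E {..<p}" and x1: "x \<noteq> cv d e"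
    and x2: "\<forall>k\<le>n. x \<noteq> sv d k \<and> x \<noteq> sv e k"
  shows "mv n p d e F x = F x"
proof (cases "x \<in> VV n")
  case False thus ?thesis using F by (simp add: mv_def PiE_def extensional_def)
next
  case True
  have "dlt n p d e x = 0" unfolding dlt_def using x1 x2 by auto
  moreover have "F x < p" using F True by auto
  ultimately show ?thesis using True by (simp add: mv_val)
qed

lemma mv_bij:
  assumes p: "1 < p" and d: "d < n" and e: "e < n" and de: "d \<noteq> e"
  shows "bij_betw (mv n p d e) (WW n p d) (WW n p e)"
  by (rule bij_betw_byWitness[where f'="mv n p e d"])
     (use mv_inv[OF p] mv_W[OF p] de d e WW_PiE in \<open>auto\<close>)


lemma negstep: assumes "a < p" "b < (p::nat)" "(a+b) mod p = c"
  shows "((p-a) mod p + (p-b) mod p) mod p = (p - c) mod p"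
proof -
  have c: "c < p" using assms by auto
  have "[int ((p-a) mod p + (p-b) mod p) = (int p - int a) + (int p - int b)] (mod int p)"
    using assms by (simp add: cong_def of_nat_mod mod_add_eq of_nat_diff)
  moreover have "[(int p - int a) + (int p - int b) = int p - int c] (mod int p)"
  proof -
    have "[int a + int b = int c] (mod int p)" using assms(3)
      by (metis cong_def cong_mod_right of_nat_add of_nat_mod)
    hence "[int p - (int a + int b) + int p = int p - int c + int p] (mod int p)"
      by (intro cong_add cong_diff cong_refl)
    moreover have "[int p - int c + int p = int p - int c] (mod int p)"
      unfolding cong_def by (rule mod_add_self2)
    ultimately show ?thesis by (metis (no_types, lifting) add.commute add_diff_eq cong_trans diff_diff_eq2)
  qed
  ultimately have "[int ((p-a) mod p + (p-b) mod p) = int (p - c)] (mod int p)"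
    using c by (simp add: of_nat_diff cong_trans)
  hence "[((p-a) mod p + (p-b) mod p) = (p - c)] (mod p)" by (metis cong_int_iff of_nat_add)
  thus ?thesis by (simp add: cong_def)
qed

definition good :: "nat \<Rightarrow> nat set \<Rightarrow> nat set" where
  "good n T = {i. i < n \<and> (\<forall>k\<le>n. sv i k \<notin> T)}"

definition unsv :: "nat \<Rightarrow> nat" where "unsv x = fst (prod_decode (x div 2))"
lemma unsv_sv[simp]: "unsv (sv i k) = i" by (simp add: unsv_def sv_def)

lemma good_mono: "T \<subseteq> S \<Longrightarrow> good n S \<subseteq> good n T"
  unfolding good_def by blast

lemma good_card: assumes T: "finite T" shows "n - card T \<le> card (good n T)"
proof -
  have "{..<n} - good n T \<subseteq> unsv ` T"
  proof
    fix i assume "i \<in> {..<n} - good n T"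
    then obtain k where "sv i k \<in> T" unfolding good_def by auto
    thus "i \<in> unsv ` T" by (metis image_eqI unsv_sv)
  qed
  hence "card ({..<n} - good n T) \<le> card T"
    by (meson T card_image_le card_mono finite_imageI le_trans)
  moreover have "card ({..<n} - good n T) = n - card (good n T)"
    by (subst card_Diff_subset) (auto simp: good_def)
  ultimately show ?thesis by linarith
qed

lemma nb_card: assumes T: "finite T" shows "card {l. cv i l \<in> T} \<le> card T"
proof -
  have "inj_on (cv i) {l. cv i l \<in> T}" by (rule inj_onI) (auto simp: cv_eq)
  moreover have "cv i ` {l. cv i l \<in> T} \<subseteq> T" by blast
  ultimately show ?thesis using card_inj_on_le T by blast
qed

lemma common_nb:
  assumes T: "finite T" and K: "card T \<le> K" and n: "3*K+3 \<le> n"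
  and i: "i \<in> good n T" and j: "j \<in> good n T"
  shows "\<exists>l\<in>good n T. l \<noteq> i \<and> l \<noteq> j \<and> cv i l \<notin> T \<and> cv j l \<notin> T"
proof -
  let ?G = "good n T"
  let ?A = "((?G - {i,j}) - {l. cv i l \<in> T}) - {l. cv j l \<in> T}"
  have fG: "finite ?G" unfolding good_def by auto
  have f1: "finite {l. cv i l \<in> T}"
  proof -
    have "inj_on (cv i) {l. cv i l \<in> T}" by (rule inj_onI) (auto simp: cv_eq)
    thus ?thesis using T by (metis (no_types, lifting) finite_imageD finite_subset image_subset_iff mem_Collect_eq)
  qed
  have f2: "finite {l. cv j l \<in> T}"
  proof -
    have "inj_on (cv j) {l. cv j l \<in> T}" by (rule inj_onI) (auto simp: cv_eq)
    thus ?thesis using T by (metis (no_types, lifting) finite_imageD finite_subset image_subset_iff mem_Collect_eq)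
  qed
  have c1: "card ?G - card {i,j} \<le> card (?G - {i,j})" by (rule diff_card_le_card_Diff) simp
  have c2: "card (?G - {i,j}) - card {l. cv i l \<in> T} \<le> card ((?G - {i,j}) - {l. cv i l \<in> T})"
    by (rule diff_card_le_card_Diff[OF f1])
  have c3: "card ((?G - {i,j}) - {l. cv i l \<in> T}) - card {l. cv j l \<in> T} \<le> card ?A"
    by (rule diff_card_le_card_Diff[OF f2])
  have "card {i,j} \<le> 2" by (simp add: card_insert_le_m1)
  moreover have "n - card T \<le> card ?G" by (rule good_card[OF T])
  moreover note nb_card[OF T, of i] nb_card[OF T, of j]
  ultimately have "0 < card ?A" using c1 c2 c3 K n by linarith
  then obtain l where "l \<in> ?A" by (metis card.empty less_irrefl ex_in_conv)
  thus ?thesis by blast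
qed

lemma WW_finite: "finite (WW n p d)"
  by (rule finite_subset[of _ "VV n \<rightarrow>\<^sub>E {..<p}"]) (auto simp: WW_def finite_VV finite_PiE)

lemma bij_T:
  assumes p: "1 < p" and T: "finite T" and K: "card T \<le> K" and n: "3*K+3 \<le> n"
  and i: "i \<in> good n T" and j: "j \<in> good n T"
  shows "\<exists>b. bij_betw b (WW n p i) (WW n p j) \<and> (\<forall>F\<in>WW n p i. \<forall>x\<in>T. b F x = F x)"
proof (cases "i = j")
  case True thus ?thesis by (intro exI[of _ id]) auto
next
  case False
  obtain l where l: "l \<in> good n T" and li: "l \<noteq> i" and lj: "l \<noteq> j" and cil: "cv i l \<notin> T"
    and cjl: "cv j l \<notin> T" using common_nb[OF T K n i j] by blast
  have iN: "i < n" and jN: "j < n" and lN: "l < n" using i j l by (auto simp: good_def)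
  have b1: "bij_betw (mv n p i l) (WW n p i) (WW n p l)" using mv_bij[OF p iN lN] li by auto
  have b2: "bij_betw (mv n p l j) (WW n p l) (WW n p j)" using mv_bij[OF p lN jN] lj by auto
  have bb: "bij_betw (mv n p l j \<circ> mv n p i l) (WW n p i) (WW n p j)" using bij_betw_trans[OF b1 b2] .
  have keep: "\<forall>F\<in>WW n p i. \<forall>x\<in>T. (mv n p l j \<circ> mv n p i l) F x = F x"
  proof (intro ballI)
    fix F x assume F: "F \<in> WW n p i" and x: "x \<in> T"
    have sT: "\<And>a k. a \<in> good n T \<Longrightarrow> k \<le> n \<Longrightarrow> x \<noteq> sv a k" using x unfolding good_def by blast
    have F1: "mv n p i l F \<in> WW n p l" using mv_W[OF p iN lN] li F by auto
    have "mv n p i l F x = F x"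
      by (rule mv_keep[OF WW_PiE[OF F]]) (use x cil sT i l in auto)
    moreover have "mv n p l j (mv n p i l F) x = mv n p i l F x"
      by (rule mv_keep[OF WW_PiE[OF F1]]) (use x cjl sT j l cv_sym in auto)
    ultimately show "(mv n p l j \<circ> mv n p i l) F x = F x" by simp
  qed
  show ?thesis using bb keep by blast
qed

definition zf :: "nat \<Rightarrow> nat \<Rightarrow> nat" where "zf n = restrict (\<lambda>_. 0) (VV n)"

lemma zf_W: "1 < p \<Longrightarrow> zf n \<in> WW n p 0"
  by (auto simp: WW_def zf_def cons_ok_def tgt_def)

lemma WW_ne: "1 < p \<Longrightarrow> d < n \<Longrightarrow> WW n p d \<noteq> {}"
proof (cases "d = 0")
  case True assume p: "1 < p" thus ?thesis using zf_W True by auto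
next
  case False assume p: "1 < p" and d: "d < n"
  have "mv n p 0 d (zf n) \<in> WW n p d" using mv_W[OF p _ d False[symmetric] zf_W[OF p]] d by simp
  thus ?thesis by auto
qed

lemma WW_card: "1 < p \<Longrightarrow> d < n \<Longrightarrow> card (WW n p d) = card (WW n p 0)"
proof (cases "d = 0")
  case False assume p: "1 < p" and d: "d < n"
  show ?thesis using bij_betw_same_card[OF mv_bij[OF p _ d False[symmetric]]] d by simp
qed simp

lemma WW0_add: assumes p: "1 < p" and F: "F \<in> WW n p 0" and G: "G \<in> WW n p 0"
  shows "fadd p (VV n) F G \<in> WW n p 0"
proof -
  have FP: "F \<in> VV n \<rightarrow>\<^sub>E {..<p}" and GP: "G \<in> VV n \<rightarrow>\<^sub>E {..<p}" using F G by (auto simp: WW_def)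
  have Fc: "cons_ok p n F" and Gc: "cons_ok p n G" using F G by (auto simp: WW_def)
  let ?H = "fadd p (VV n) F G"
  have Hv: "\<And>x. x \<in> VV n \<Longrightarrow> ?H x = (F x + G x) mod p" by (simp add: fadd_def)
  have "cons_ok p n ?H"
    unfolding cons_ok_def
  proof (intro allI impI)
    fix i j assume i: "i < n" and j: "j < n"
    have fc: "if i \<le> j then (F (sv i j) + F (cv i j)) mod p = F (sv i (Suc j))
                       else (F (sv i (Suc j)) + F (cv i j)) mod p = F (sv i j)"
      using Fc i j unfolding cons_ok_def by blast
    have gc: "if i \<le> j then (G (sv i j) + G (cv i j)) mod p = G (sv i (Suc j))
                       else (G (sv i (Suc j)) + G (cv i j)) mod p = G (sv i j)"
      using Gc i j unfolding cons_ok_def by blast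
    have m: "sv i j \<in> VV n" "sv i (Suc j) \<in> VV n" "cv i j \<in> VV n" using i j by auto
    have lt: "G (sv i j) < p" "G (sv i (Suc j)) < p" using m GP by auto
    show "if i \<le> j then (?H (sv i j) + ?H (cv i j)) mod p = ?H (sv i (Suc j))
                       else (?H (sv i (Suc j)) + ?H (cv i j)) mod p = ?H (sv i j)"
    proof (cases "i \<le> j")
      case True
      from modstep[of "F (sv i j)" "F (cv i j)" p "F (sv i (Suc j))" "G (sv i j)" "G (cv i j)" "G (sv i (Suc j))"]
      show ?thesis using True fc gc lt by (simp add: Hv m)
    next
      case False
      from modstep[of "F (sv i (Suc j))" "F (cv i j)" p "F (sv i j)" "G (sv i (Suc j))" "G (cv i j)" "G (sv i j)"]
      show ?thesis using False fc gc lt by (simp add: Hv m)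
    qed
  qed
  moreover have "\<forall>i<n. ?H (sv i 0) = 0 \<and> ?H (cv i i) = 0 \<and> ?H (sv i n) = tgt p 0 i"
    using F G by (auto simp: WW_def Hv tgt_def)
  moreover have "?H \<in> VV n \<rightarrow>\<^sub>E {..<p}" by (rule fadd_in) (use p in simp)
  ultimately show ?thesis unfolding WW_def by blast
qed

lemma WW0_neg: assumes p: "1 < p" and F: "F \<in> WW n p 0"
  shows "fneg p (VV n) F \<in> WW n p 0"
proof -
  have FP: "F \<in> VV n \<rightarrow>\<^sub>E {..<p}" using F by (auto simp: WW_def)
  have Fc: "cons_ok p n F" using F by (auto simp: WW_def)
  let ?H = "fneg p (VV n) F"
  have Hv: "\<And>x. x \<in> VV n \<Longrightarrow> ?H x = (p - F x) mod p" by (simp add: fneg_def)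
  have "cons_ok p n ?H"
    unfolding cons_ok_def
  proof (intro allI impI)
    fix i j assume i: "i < n" and j: "j < n"
    have fc: "if i \<le> j then (F (sv i j) + F (cv i j)) mod p = F (sv i (Suc j))
                       else (F (sv i (Suc j)) + F (cv i j)) mod p = F (sv i j)"
      using Fc i j unfolding cons_ok_def by blast
    have m: "sv i j \<in> VV n" "sv i (Suc j) \<in> VV n" "cv i j \<in> VV n" using i j by auto
    have lt: "F (sv i j) < p" "F (sv i (Suc j)) < p" "F (cv i j) < p" using m FP by auto
    show "if i \<le> j then (?H (sv i j) + ?H (cv i j)) mod p = ?H (sv i (Suc j))
                       else (?H (sv i (Suc j)) + ?H (cv i j)) mod p = ?H (sv i j)"
    proof (cases "i \<le> j")
      case True
      from negstep[of "F (sv i j)" p "F (cv i j)" "F (sv i (Suc j))"]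
      show ?thesis using True fc lt by (simp add: Hv m)
    next
      case False
      from negstep[of "F (sv i (Suc j))" p "F (cv i j)" "F (sv i j)"]
      show ?thesis using False fc lt by (simp add: Hv m)
    qed
  qed
  moreover have "\<forall>i<n. ?H (sv i 0) = 0 \<and> ?H (cv i i) = 0 \<and> ?H (sv i n) = tgt p 0 i"
    using F by (auto simp: WW_def Hv tgt_def)
  moreover have "?H \<in> VV n \<rightarrow>\<^sub>E {..<p}" using p by (auto simp: fneg_def)
  ultimately show ?thesis unfolding WW_def by blast
qed

lemma WW0_card_dvd: assumes p: "1 < p" shows "card (WW n p 0) dvd p ^ card (VV n)"
proof (rule subgroup_card_dvd)
  show "0 < p" using p by simp
  show "finite (VV n)" by (rule finite_VV)
  show "WW n p 0 \<subseteq> VV n \<rightarrow>\<^sub>E {..<p}" using WW_PiE by blast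
  show "\<And>f g. f \<in> WW n p 0 \<Longrightarrow> g \<in> WW n p 0 \<Longrightarrow> fadd p (VV n) f g \<in> WW n p 0"
    by (rule WW0_add[OF p])
  show "\<And>f. f \<in> WW n p 0 \<Longrightarrow> fneg p (VV n) f \<in> WW n p 0" by (rule WW0_neg[OF p])
  show "restrict (\<lambda>_. 0) (VV n) \<in> WW n p 0" using zf_W[OF p] by (simp add: zf_def)
qed

lemma WW0_coprime: assumes p: "prime p" and q: "prime q" and pq: "p \<noteq> q"
  shows "coprime (card (WW n p 0)) q"
proof -
  have p1: "1 < p" using p prime_gt_1_nat by blast
  have "coprime p q" by (rule primes_coprime[OF p q pq])
  hence "coprime (p ^ card (VV n)) q" by simp
  thus ?thesis using coprime_divisors[OF WW0_card_dvd[OF p1] dvd_refl] by blast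
qed


definition admf :: "nat \<Rightarrow> nat \<Rightarrow> nat set \<Rightarrow> (nat \<Rightarrow> nat) \<Rightarrow> bool" where
  "admf n p T F = (\<exists>i\<in>good n T. F \<in> WW n p i)"

lemma adm_pres:
  assumes p: "1 < p" and i: "i \<in> good n S" and F: "F \<in> WW n p i" and R: "R \<in> {0..p}"
    and t: "t \<in> srel (XX n) R" and tS: "set t \<subseteq> S"
  shows "map F t \<in> srel (zstruct p) R"
proof -
  have FP: "F \<in> VV n \<rightarrow>\<^sub>E {..<p}" and Fc: "cons_ok p n F"
    and Fu: "\<And>i'. i' < n \<Longrightarrow> F (sv i' 0) = 0 \<and> F (cv i' i') = 0 \<and> F (sv i' n) = tgt p i i'"
    using F by (auto simp: WW_def)
  have iS: "\<And>k. k \<le> n \<Longrightarrow> sv i k \<notin> S" using i by (auto simp: good_def)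
  consider (z) "R = 0" | (o) "R = 1" | (tw) "R = 2" | (oth) "R > 2" by linarith
  thus ?thesis
  proof cases
    case z
    hence "t \<in> tern n" using t by (simp add: XX_def)
    then obtain a b c where tt: "t = [a, b, c]" and abc: "a \<in> VV n" "b \<in> VV n" "c \<in> VV n"
      and e: "(F a + F b) mod p = F c"
      unfolding tern_def
    proof (elim UnE CollectE exE conjE)
      fix i' j assume "t = [sv i' j, cv i' j, sv i' (Suc j)]" "i' < n" "j < n" "i' \<le> j"
        and th: "\<And>a b c. t = [a, b, c] \<Longrightarrow> a \<in> VV n \<Longrightarrow> b \<in> VV n \<Longrightarrow> c \<in> VV n \<Longrightarrow> (F a + F b) mod p = F c \<Longrightarrow> thesis"
      moreover have "(F (sv i' j) + F (cv i' j)) mod p = F (sv i' (Suc j))"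
        using Fc \<open>i' < n\<close> \<open>j < n\<close> \<open>i' \<le> j\<close> unfolding cons_ok_def by auto
      ultimately show thesis by simp
    next
      fix i' j assume "t = [sv i' (Suc j), cv i' j, sv i' j]" "i' < n" "j < n" "j < i'"
        and th: "\<And>a b c. t = [a, b, c] \<Longrightarrow> a \<in> VV n \<Longrightarrow> b \<in> VV n \<Longrightarrow> c \<in> VV n \<Longrightarrow> (F a + F b) mod p = F c \<Longrightarrow> thesis"
      moreover have "(F (sv i' (Suc j)) + F (cv i' j)) mod p = F (sv i' j)"
        using Fc \<open>i' < n\<close> \<open>j < n\<close> \<open>j < i'\<close> unfolding cons_ok_def by auto
      ultimately show thesis by simp
    qed
    have "F a < p" "F b < p" "F c < p" using abc FP by auto
    thus ?thesis using z tt e by (simp add: zstruct_def)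
  next
    case o
    hence "t \<in> un0 n" using t by (simp add: XX_def)
    hence "map F t = [0]"
    proof (unfold un0_def, elim UnE CollectE exE conjE)
      fix i' assume "t = [sv i' 0]" "i' < n" thus "map F t = [0]" using Fu by simp
    next
      fix i' assume "t = [cv i' i']" "i' < n" thus "map F t = [0]" using Fu by simp
    next
      fix i' assume tt: "t = [sv i' n]" "0 < i'" "i' < n"
      hence "i' \<noteq> i" using tS iS[OF order_refl] by auto
      thus "map F t = [0]" using Fu[OF tt(3)] tt by (simp add: tgt_def)
    qed
    thus ?thesis using o by (simp add: zstruct_def)
  next
    case tw
    hence tt: "t = [sv 0 n]" using t by (simp add: XX_def)
    have "0 \<noteq> i"
    proof
      assume "0 = i" thus False using tt tS iS[OF order_refl] by auto
    qed
    moreover have "0 < n" using i by (auto simp: good_def)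
    ultimately have "F (sv 0 n) = 1" using Fu[of 0] by (simp add: tgt_def)
    thus ?thesis using tw tt by (simp add: zstruct_def)
  next
    case oth thus ?thesis using t by (simp add: XX_def)
  qed
qed

lemma good_ne: assumes S: "finite S" and K: "card S \<le> K" and n: "3*K+3 \<le> n"
  shows "\<exists>j. j \<in> good n S"
proof -
  have "n - card S \<le> card (good n S)" by (rule good_card[OF S])
  hence "0 < card (good n S)" using K n by linarith
  thus ?thesis by (metis card.empty less_irrefl ex_in_conv)
qed

lemma adm_ext:
  assumes p: "1 < p" and S: "finite S" and K: "card S \<le> K" and n: "3*K+3 \<le> n"
    and TS: "T \<subseteq> S" and a: "admf n p T F"
  shows "\<exists>F'. admf n p S F' \<and> (\<forall>x\<in>T. F' x = F x)"
proof -
  obtain i where i: "i \<in> good n T" and F: "F \<in> WW n p i" using a by (auto simp: admf_def)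
  obtain j where j: "j \<in> good n S" using good_ne[OF S K n] by blast
  have jT: "j \<in> good n T" using good_mono[OF TS] j by blast
  have T: "finite T" using S TS finite_subset by blast
  have KT: "card T \<le> K" using card_mono[OF S TS] K by simp
  obtain b where b: "bij_betw b (WW n p i) (WW n p j)" and bk: "\<forall>F\<in>WW n p i. \<forall>x\<in>T. b F x = F x"
    using bij_T[OF p T KT n i jT] by blast
  have "b F \<in> WW n p j" using b F bij_betwE by blast
  thus ?thesis using j bk F by (auto simp: admf_def)
qed

lemma dl_X:
  assumes p: "1 < p" and wf: "wf_prog (zsig p) P"
    and Kb: "\<forall>r\<in>set (prules P). card (rule_vars r) \<le> K" and K3: "3 \<le> K" and n: "3*K+3 \<le> n"
    and as: "as \<in> dl_out (zsig p) P (XX n)"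
  shows "card (set as) \<le> K" and "admf n p (set as) F \<Longrightarrow> map F as \<in> dl_out (zsig p) P (zstruct p)"
proof -
  have tys: "tys (zsig p) = {0}" by (simp add: zsig_def)
  have Kx: "\<forall>R\<in>syms (zsig p). \<forall>t\<in>srel (XX n) R. card (set t) \<le> K"
  proof (intro ballI)
    fix R t assume R: "R \<in> syms (zsig p)" and t: "t \<in> srel (XX n) R"
    have "length t = length (ar (zsig p) R)" using XX_len[OF _ t] R by (simp add: zsig_def)
    moreover have "length (ar (zsig p) R) \<le> 3" by (simp add: zsig_def)
    ultimately show "card (set t) \<le> K" using card_length[of t] K3 by linarith
  qed
  have a1: "\<And>S F x. admf n p S F \<Longrightarrow> x \<in> sdom (XX n) 0 \<Longrightarrow> F x \<in> sdom (zstruct p) 0"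
    by (auto simp: admf_def WW_def XX_def zstruct_def)
  have a1': "\<And>S F R t. admf n p S F \<Longrightarrow> R \<in> syms (zsig p) \<Longrightarrow> t \<in> srel (XX n) R \<Longrightarrow> set t \<subseteq> S
     \<Longrightarrow> map F t \<in> srel (zstruct p) R"
  proof -
    fix S F R t assume a: "admf n p S F" and R: "R \<in> syms (zsig p)" and t: "t \<in> srel (XX n) R"
      and tS: "set t \<subseteq> S"
    obtain i where i: "i \<in> good n S" and F: "F \<in> WW n p i" using a by (auto simp: admf_def)
    show "map F t \<in> srel (zstruct p) R"
      by (rule adm_pres[OF p i F _ t tS]) (use R in \<open>simp add: zsig_def\<close>)
  qed
  have a2: "\<And>T S F. admf n p T F \<Longrightarrow> T \<subseteq> S \<Longrightarrow> finite S \<Longrightarrow> card S \<le> K \<Longrightarrow>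
      \<exists>F'. admf n p S F' \<and> (\<forall>x\<in>T. F' x = F x)"
    using adm_ext[OF p _ _ n] by blast
  have a3: "\<And>T S F. admf n p S F \<Longrightarrow> T \<subseteq> S \<Longrightarrow> admf n p T F"
    unfolding admf_def using good_mono by blast
  show "card (set as) \<le> K"
    by (rule dl_transfer_out(1)[OF wf tys Kb Kx, where adm="admf n p"]) (fact a1 a1' a2 a3 as)+
  assume "admf n p (set as) F"
  show "map F as \<in> dl_out (zsig p) P (zstruct p)"
    by (rule dl_transfer_out(2)[OF wf tys Kb Kx, where adm="admf n p"]) (fact a1 a1' a2 a3 as \<open>admf n p (set as) F\<close>)+
qed


lemma mapnth: "map (\<lambda>i. f (xs ! i)) [0..<length xs] = map f xs"
  by (rule nth_equalityI) auto

lemma zstruct_struct: "is_struct (zsig p) (zstruct p) \<and> finite_struct (zsig p) (zstruct p)"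
  by (auto simp: is_struct_def finite_struct_def zsig_def zstruct_def less_Suc_eq nth_Cons split: nat.splits)

lemma zstruct_self: "homto (zsig p) (zstruct p) (zstruct p)"
proof -
  have "hom (zsig p) (zstruct p) (zstruct p) (\<lambda>t x. x)"
    unfolding hom_def by (simp add: map_nth)
  thus ?thesis unfolding homto_def by blast
qed

lemma avg_sum:
  assumes p: "1 < p" and K: "card (set w) \<le> K" and n: "3*K+3 \<le> n"
    and i: "i \<in> good n (set w)" and j: "j \<in> good n (set w)"
  shows "(\<Sum>F\<in>WW n p i. g (map F w)) = (\<Sum>F\<in>WW n p j. g (map F w))"
proof -
  obtain b where b: "bij_betw b (WW n p i) (WW n p j)" and bk: "\<forall>F\<in>WW n p i. \<forall>x\<in>set w. b F x = F x"
    using bij_T[OF p _ K n i j] by blast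
  have "(\<Sum>F\<in>WW n p i. g (map F w)) = (\<Sum>F\<in>WW n p i. g (map (b F) w))"
    by (rule sum.cong[OF refl]) (use bk in \<open>simp cong: map_cong\<close>)
  also have "\<dots> = (\<Sum>F\<in>WW n p j. g (map F w))"
    using sum.reindex_bij_betw[OF b, of "\<lambda>F. g (map F w)"] .
  finally show ?thesis .
qed


lemma len3: "length ys = 3 \<Longrightarrow> ys = [ys!0, ys!1, ys!2]"
  by (auto simp: numeral_3_eq_3 length_Suc_conv)

theorem mainTheorem12:
  fixes p q :: nat
  assumes "prime p" and "prime q" and "p \<noteq> q"
  shows "\<not> dl_le (zsig p) (zstruct p) (zsig q) (zstruct q)"
proof
  assume "dl_le (zsig p) (zstruct p) (zsig q) (zstruct q)"
  then obtain Sg phi u where wfd: "wf_dint (zsig p) Sg phi" and wfu: "wf_ugad Sg (zsig q) u"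
    and red: "is_reduction (zsig p) (zstruct p) (zsig q) (zstruct q)
                 (\<lambda>X. apply_ugad Sg u (apply_dint (zsig p) Sg phi X))"
    unfolding dl_le_def by blast
  define psi where "psi X = apply_ugad Sg u (apply_dint (zsig p) Sg phi X)" for X :: "nat struct"
  have p1: "1 < p" using assms(1) prime_gt_1_nat by blast
  have q1: "1 < q" using assms(2) prime_gt_1_nat by blast
  have wsg: "wf_sig Sg" using wfd by (simp add: wf_dint_def)
  define Ps where "Ps = dt phi ` tys Sg \<union> dr phi ` syms Sg"
  have finPs: "finite Ps" using wsg by (simp add: Ps_def wf_sig_def)
  define KS where "KS = (\<Union>P\<in>Ps. (\<lambda>r. card (rule_vars r)) ` set (prules P))"
  have finKS: "finite KS" using finPs by (simp add: KS_def)
  define K where "K = Max (insert 3 KS)"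
  have K3: "3 \<le> K" unfolding K_def using finKS by simp
  have Kb: "\<And>P. P \<in> Ps \<Longrightarrow> \<forall>r\<in>set (prules P). card (rule_vars r) \<le> K"
    unfolding K_def KS_def using finKS KS_def by (auto intro!: Max_ge)
  have wfP: "\<And>P. P \<in> Ps \<Longrightarrow> wf_prog (zsig p) P"
    using wfd by (auto simp: Ps_def wf_dint_def)
  define n where "n = 3*K+3"
  have nK: "3*K+3 \<le> n" by (simp add: n_def)
  have n0: "0 < n" by (simp add: n_def)
  note DL1 = dl_X(1)[OF p1 wfP Kb K3 nK]
  note DL2 = dl_X(2)[OF p1 wfP Kb K3 nK]
  have "homto (zsig q) (psi (zstruct p)) (zstruct q)"
    using red zstruct_struct zstruct_self unfolding is_reduction_def psi_def by blast
  then obtain H where H: "hom (zsig q) (psi (zstruct p)) (zstruct q) H" unfolding homto_def by blast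
  define N where "N = card (WW n p 0)"
  have "coprime N q" unfolding N_def by (rule WW0_coprime[OF assms])
  then obtain inv where inv: "[N * inv = 1] (mod q)" using cong_solve_coprime_nat by auto
  define sel where "sel T = (SOME i. i \<in> good n T)" for T
  have sel: "\<And>T. finite T \<Longrightarrow> card T \<le> K \<Longrightarrow> sel T \<in> good n T"
    unfolding sel_def using good_ne[OF _ _ nK] by (metis someI_ex)
  define G0 where "G0 x = (inv * (\<Sum>F\<in>WW n p (sel (set (snd x))). H 0 (fst x, map F (snd x)))) mod q"
    for x :: "nat \<times> nat list"
  have "hom (zsig q) (psi (XX n)) (zstruct q) (\<lambda>_. G0)"
    unfolding hom_def
  proof (intro conjI ballI)
    fix t x assume "t \<in> tys (zsig q)" and "x \<in> sdom (psi (XX n)) t"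
    show "G0 x \<in> sdom (zstruct q) t" using q1 by (simp add: G0_def zstruct_def)
  next
    fix R' xs assume R': "R' \<in> syms (zsig q)" and xs: "xs \<in> srel (psi (XX n)) R'"
    obtain R ws where R: "R \<in> syms Sg" and urR: "ur u R = R'"
      and ws: "ws \<in> srel (apply_dint (zsig p) Sg phi (XX n)) R"
      and xsd: "xs = map (\<lambda>i. (ar Sg R ! i, ws ! i)) [0..<length ws]"
      using xs unfolding psi_def apply_ugad_def by auto
    have lws: "length ws = length (ar Sg R)"
      and wsk: "\<And>k. k < length ws \<Longrightarrow> ws ! k \<in> dl_out (zsig p) (dt phi (ar Sg R ! k)) (XX n)"
      and wsc: "concat ws \<in> dl_out (zsig p) (dr phi R) (XX n)"
      using ws unfolding apply_dint_def by auto
    have arq: "ar (zsig q) R' = map (ud u) (ar Sg R)" using wfu R urR by (auto simp: wf_ugad_def)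
    have PR: "dr phi R \<in> Ps" using R by (simp add: Ps_def)
    have Pk: "\<And>k. k < length ws \<Longrightarrow> dt phi (ar Sg R ! k) \<in> Ps"
    proof -
      fix k assume k: "k < length ws"
      have "ar Sg R ! k \<in> set (ar Sg R)" using k lws by simp
      hence "ar Sg R ! k \<in> tys Sg" using wsg R by (auto simp: wf_sig_def)
      thus "dt phi (ar Sg R ! k) \<in> Ps" by (simp add: Ps_def)
    qed
    define T where "T = set (concat ws)"
    have finT: "finite T" by (simp add: T_def)
    have KT: "card T \<le> K" unfolding T_def by (rule DL1[OF PR PR wsc])
    define i0 where "i0 = sel T"
    have i0: "i0 \<in> good n T" unfolding i0_def by (rule sel[OF finT KT])
    have i0n: "i0 < n" using i0 by (simp add: good_def)
    have subk: "\<And>k. k < length ws \<Longrightarrow> set (ws ! k) \<subseteq> T"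
      unfolding T_def by (auto simp: set_concat intro: nth_mem)
    have i0k: "\<And>k. k < length ws \<Longrightarrow> i0 \<in> good n (set (ws ! k))"
      using good_mono subk i0 by blast
    define xsF where "xsF F = map (\<lambda>i. (ar Sg R ! i, map F (ws ! i))) [0..<length ws]" for F :: "nat \<Rightarrow> nat"
    have claim1: "\<And>F. F \<in> WW n p i0 \<Longrightarrow> map (H 0) (xsF F) \<in> srel (zstruct q) R'"
    proof -
      fix F assume F: "F \<in> WW n p i0"
      define wsF where "wsF = map (map F) ws"
      have "wsF \<in> srel (apply_dint (zsig p) Sg phi (zstruct p)) R"
      proof -
        have "\<forall>k<length wsF. wsF ! k \<in> dl_out (zsig p) (dt phi (ar Sg R ! k)) (zstruct p)"
        proof (intro allI impI)
          fix k assume "k < length wsF"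
          hence k: "k < length ws" by (simp add: wsF_def)
          have "admf n p (set (ws ! k)) F" using i0k[OF k] F by (auto simp: admf_def)
          thus "wsF ! k \<in> dl_out (zsig p) (dt phi (ar Sg R ! k)) (zstruct p)"
            using DL2[OF Pk[OF k] Pk[OF k] wsk[OF k]] k by (simp add: wsF_def)
        qed
        moreover have "concat wsF \<in> dl_out (zsig p) (dr phi R) (zstruct p)"
        proof -
          have "admf n p (set (concat ws)) F" using i0 F by (auto simp: admf_def T_def)
          thus ?thesis using DL2[OF PR PR wsc] by (simp add: wsF_def map_concat)
        qed
        ultimately show ?thesis using lws by (simp add: apply_dint_def wsF_def)
      qed
      moreover have "xsF F = map (\<lambda>i. (ar Sg R ! i, wsF ! i)) [0..<length wsF]"
        by (simp add: xsF_def wsF_def)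
      ultimately have "xsF F \<in> srel (psi (zstruct p)) R'"
        unfolding psi_def apply_ugad_def using R urR by auto
      hence "map (\<lambda>i. H (ar (zsig q) R' ! i) (xsF F ! i)) [0..<length (xsF F)] \<in> srel (zstruct q) R'"
        using H R' unfolding hom_def by blast
      moreover have "\<forall>k<length (xsF F). ar (zsig q) R' ! k = 0"
      proof (intro allI impI)
        fix k assume "k < length (xsF F)"
        hence "k < length (ar (zsig q) R')" using arq lws by (simp add: xsF_def)
        thus "ar (zsig q) R' ! k = 0" by (rule ar_zsig)
      qed
      ultimately show "map (H 0) (xsF F) \<in> srel (zstruct q) R'"
        using hom_tuple by metis
    qed
    define a where "a k = (\<Sum>F\<in>WW n p i0. H 0 (ar Sg R ! k, map F (ws ! k)))" for k
    have claim2: "\<And>k. k < length ws \<Longrightarrow> G0 (xs ! k) = (inv * a k) mod q"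
    proof -
      fix k assume k: "k < length ws"
      have xk: "xs ! k = (ar Sg R ! k, ws ! k)" using k by (simp add: xsd)
      have Kk: "card (set (ws ! k)) \<le> K" using card_mono[OF finT subk[OF k]] KT by simp
      have sk: "sel (set (ws ! k)) \<in> good n (set (ws ! k))" by (rule sel[OF _ Kk]) simp
      show "G0 (xs ! k) = (inv * a k) mod q"
        unfolding G0_def xk a_def using avg_sum[OF p1 Kk nK sk i0k[OF k], of "\<lambda>w. H 0 (ar Sg R ! k, w)"] by simp
    qed
    have img: "map (\<lambda>i. G0 (xs ! i)) [0..<length xs] = map (\<lambda>k. (inv * a k) mod q) [0..<length ws]"
      using claim2 by (simp add: xsd)
    obtain F0 where F0: "F0 \<in> WW n p i0" using WW_ne[OF p1 i0n] by blast
    have lxsF: "\<And>F. length (xsF F) = length ws" by (simp add: xsF_def)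
    have xsFk: "\<And>F k. k < length ws \<Longrightarrow> xsF F ! k = (ar Sg R ! k, map F (ws ! k))"
      by (simp add: xsF_def)
    show "map (\<lambda>i. G0 (xs ! i)) [0..<length xs] \<in> srel (zstruct q) R'"
    proof (cases "R' = 0")
      case True
      have srel0: "srel (zstruct q) R' = {[x1, x2, y] |x1 x2 y. x1 < q \<and> x2 < q \<and> y < q \<and> (x1 + x2) mod q = y}"
        using True by (simp add: zstruct_def)
      have l3: "length ws = 3" using claim1[OF F0] srel0 lxsF[of F0] by auto
      have each: "\<And>F. F \<in> WW n p i0 \<Longrightarrow>
        (H 0 (ar Sg R ! 0, map F (ws ! 0)) + H 0 (ar Sg R ! 1, map F (ws ! 1))) mod q = H 0 (ar Sg R ! 2, map F (ws ! 2))"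
      proof -
        fix F assume F: "F \<in> WW n p i0"
        have "map (H 0) (xsF F) = [H 0 (xsF F ! 0), H 0 (xsF F ! 1), H 0 (xsF F ! 2)]"
          using len3[of "xsF F"] l3 lxsF[of F] by (metis list.simps(8,9))
        thus "?thesis F" using claim1[OF F] srel0 xsFk l3 by auto
      qed
      have "[a 0 + a 1 = a 2] (mod q)"
      proof -
        have "a 0 + a 1 = (\<Sum>F\<in>WW n p i0. H 0 (ar Sg R ! 0, map F (ws ! 0)) + H 0 (ar Sg R ! 1, map F (ws ! 1)))"
          by (simp add: a_def sum.distrib)
        moreover have "[(\<Sum>F\<in>WW n p i0. H 0 (ar Sg R ! 0, map F (ws ! 0)) + H 0 (ar Sg R ! 1, map F (ws ! 1)))
            = a 2] (mod q)"
          unfolding a_def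
        proof (rule cong_sum)
          fix F assume F: "F \<in> WW n p i0"
          show "[H 0 (ar Sg R ! 0, map F (ws ! 0)) + H 0 (ar Sg R ! 1, map F (ws ! 1)) = H 0 (ar Sg R ! 2, map F (ws ! 2))] (mod q)"
          proof -
            have e: "(H 0 (ar Sg R ! 0, map F (ws ! 0)) + H 0 (ar Sg R ! 1, map F (ws ! 1))) mod q = H 0 (ar Sg R ! 2, map F (ws ! 2))"
              by (rule each[OF F])
            show ?thesis unfolding cong_def by (metis e mod_mod_trivial)
          qed
        qed
        ultimately show ?thesis by (simp only:)
      qed
      hence c1: "[inv * a 0 + inv * a 1 = inv * a 2] (mod q)"
        using cong_scalar_left[of "a 0 + a 1" "a 2" q inv] by (simp add: distrib_left)
      have e: "((inv * a 0) mod q + (inv * a 1) mod q) mod q = (inv * a 2) mod q"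
        using c1 unfolding cong_def by (simp add: mod_add_eq)
      have u3: "[0..<length ws] = [0,1,2]" using l3 by (simp add: upt_rec)
      have "map (\<lambda>i. G0 (xs ! i)) [0..<length xs] = map (\<lambda>k. (inv * a k) mod q) [0,1,2]"
        using img u3 by (simp only:)
      hence "map (\<lambda>i. G0 (xs ! i)) [0..<length xs] = [(inv * a 0) mod q, (inv * a 1) mod q, (inv * a 2) mod q]"
        by simp
      thus ?thesis unfolding srel0 using e q1 by auto
    next
      case False
      have srel1: "srel (zstruct q) R' = {[R' - 1]}" using False by (simp add: zstruct_def)
      have Rq: "R' - 1 < q" using R' False by (simp add: zsig_def)
      have "length (map (H 0) (xsF F0)) = 1" using claim1[OF F0] srel1 by simp
      hence l1: "length ws = 1" using lxsF[of F0] by simp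
      have each: "\<And>F. F \<in> WW n p i0 \<Longrightarrow> H 0 (ar Sg R ! 0, map F (ws ! 0)) = R' - 1"
      proof -
        fix F assume F: "F \<in> WW n p i0"
        have "map (H 0) (xsF F) = [H 0 (xsF F ! 0)]"
          using l1 lxsF[of F] by (intro nth_equalityI) auto
        hence "[H 0 (xsF F ! 0)] = [R' - 1]" using claim1[OF F] srel1 by simp
        thus "H 0 (ar Sg R ! 0, map F (ws ! 0)) = R' - 1" using xsFk[of 0 F] l1 by simp
      qed
      have a0: "a 0 = N * (R' - 1)"
        unfolding a_def N_def using each WW_card[OF p1 i0n] by simp
      have "[N * inv * (R' - 1) = 1 * (R' - 1)] (mod q)" by (rule cong_scalar_right[OF inv])
      hence "[inv * a 0 = R' - 1] (mod q)" using a0 by (simp add: ac_simps)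
      hence g0: "(inv * a 0) mod q = R' - 1" using Rq by (simp add: cong_def)
      have u1: "[0..<length ws] = [0]" using l1 by simp
      have "map (\<lambda>i. G0 (xs ! i)) [0..<length xs] = map (\<lambda>k. (inv * a k) mod q) [0]"
        using img u1 by (simp only:)
      thus ?thesis using g0 srel1 by simp
    qed
  qed
  hence "homto (zsig q) (psi (XX n)) (zstruct q)" unfolding homto_def by blast
  hence "homto (zsig p) (XX n) (zstruct p)"
    using red XX_struct[OF n0] unfolding is_reduction_def psi_def by blast
  thus False using XX_unsat[OF assms(1) n0] by blast
qed


end
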